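(* Let $\Omega\subset\mathbb{R}^2$ be a bounded domain, $X\subset\overline{\Omega}$ finite with $X\setminus\partial\Omega\subset\mathrm{int}(\mathrm{conv}(X\cap\partial\Omega))$, and $f_X$ a discrete load on $X$. Assume $(\mathbf{s},\mathbf{q},\mathbf{r})\in\mathbb{R}^{3\times m}$ solves $(\mathcal{P}_X)$ and $(\mathbf{u}_1,\mathbf{u}_2,\mathbf{w})\in\mathbb{R}^{3\times n}$ (with some slack vectors) solves $(\mathcal{P}_X^* )$. Then the pair $$\mathbf{z}=\tfrac12\mathbf{w},\qquad\hat{\mathbf{s}}=\mathbf{J}(\mathbf{z})\mathbf{s}$$ solves problem $(\mathrm{MVGS}_X)$, and $\mathcal{V}_{X,\min}=\mathcal{Z}_X$.
   Context: Discrete setting: $\bar n=\#X$, $n=\#(X\setminus\partial\Omega)$, enumeration $\chi:\{1,\dots,n\}\to X\setminus\partial\Omega$; $m=\bar n(\bar n-1)/2$, enumeration $k\mapsto\{\chi_-(k),\chi_+(k)\}$ of unordered pairs of distinct points of $X$. $f_i=f_X(\{\chi(i)\})$, $l_k=|\chi_+(k)-\chi_-(k)|$. Vectors in $\mathbb{R}^n$ are identified with functions on $X$ vanishing on $X\cap\partial\Omega$. $\mathbf{B}_1,\mathbf{B}_2,\mathbf{D}\in\mathbb{R}^{m\times n}$: $(\mathbf{B}_1\mathbf{u}_1+\mathbf{B}_2\mathbf{u}_2)_k=(u(\chi_+(k))-u(\chi_-(k)))\cdot(\chi_+(k)-\chi_-(k))/l_k$ (with $u=(u_1,u_2)$ in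 a fixed Cartesian basis), $(\mathbf{D}\mathbf{w})_k=w(\chi_+(k))-w(\chi_-(k))$. $\mathrm{K}=\{(t_1,t_2,t_3):t_1,t_2\ge0,2t_1t_2\ge t_3^2\}$. $(\mathcal{P}_X)$: $\inf\{\mathbf{l}^\top\mathbf{s}+2\mathbf{l}^\top\mathbf{r}:\mathbf{s},\mathbf{r}\in\mathbb{R}^m_+,\mathbf{q}\in\mathbb{R}^m,\mathbf{B}_1^\top\mathbf{s}=\mathbf{B}_2^\top\mathbf{s}=\mathbf{0},\mathbf{D}^\top\mathbf{q}=\mathbf{f},(r_k,s_k,q_k)\in\mathrm{K}\ \forall k\}$. $(\mathcal{P}_X^* )$: $\sup\{\mathbf{f}^\top\mathbf{w}:\mathbf{t}_2+\mathbf{B}_1\mathbf{u}_1+\mathbf{B}_2\mathbf{u}_2=\mathbf{l},\mathbf{t}_3+\mathbf{D}\mathbf{w}=\mathbf{0},\mathbf{t}_1=2\mathbf{l},(t_{1;k},t_{2;k},t_{3;k})\in\mathrm{K}\ \forall k\}$ over $\mathbf{u}_1,\mathbf{u}_2,\mathbf{w}\in\mathbb{R}^n$, $\mathbf{t}_1,\mathbf{t}_2\in\mathbb{R}^m_+$, $\mathbf{t}_3\in\mathbb{R}^m$. It is known that $\min\mathcal{P}_X=\max\mathcal{P}_X^*=:\mathcal{Z}_X$. For $\mathbf{z}\in\mathbb{R}^n$: $\Delta_k(\mathbf{z})=(\mathbf{D}\mathbf{z})_k/l_k$, $\mathbf{J}(\mathbf{z})$ diagonal with $J_{kk}(\mathbf{z})=\sqrt{1+\Delta_k(\mathbf{z})^2}$,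 $\hat l_k(\mathbf{z})=J_{kk}(\mathbf{z})l_k$. $(\mathrm{MVGS}_X)$: $\mathcal{V}_{X,\min}=\inf\{\sum_k\hat l_k(\mathbf{z})\hat s_k:\mathbf{z}\in\mathbb{R}^n,\hat{\mathbf{s}}\in\mathbb{R}^m_+,\ \mathbf{B}_1^\top\mathbf{s}=\mathbf{0},\mathbf{B}_2^\top\mathbf{s}=\mathbf{0},\mathbf{D}^\top\mathbf{q}=\mathbf{f}\text{ where }s_k=\hat s_k/J_{kk}(\mathbf{z}),\ q_k=\Delta_k(\mathbf{z})\hat s_k/J_{kk}(\mathbf{z})\}$. *)

theory Defs
  imports "HOL-Analysis.Analysis"
begin

type_synonym pt = "real ^ 2"

text \<open>Vectors in R^n are index functions nat => real (only indices 1..n matter);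
  vectors in R^m likewise (indices 1..m). The point value of an R^n vector v
  at a point p (zero at points not in the image of chi, i.e. at boundary points).\<close>

definition ptval :: "(nat \<Rightarrow> pt) \<Rightarrow> nat \<Rightarrow> (nat \<Rightarrow> real) \<Rightarrow> pt \<Rightarrow> real" where
  "ptval chi n v p = (\<Sum>i\<in>{1..n}. if chi i = p then v i else 0)"

definition len :: "(nat \<Rightarrow> pt) \<Rightarrow> (nat \<Rightarrow> pt) \<Rightarrow> nat \<Rightarrow> real" where
  "len chim chip k = norm (chip k - chim k)"

definition indic_diff :: "(nat \<Rightarrow> pt) \<Rightarrow> (nat \<Rightarrow> pt) \<Rightarrow> (nat \<Rightarrow> pt) \<Rightarrow> nat \<Rightarrow> nat \<Rightarrow> real" where
  "indic_diff chi chim chip k i =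
     (if chi i = chip k then 1 else 0) - (if chi i = chim k then 1 else 0)"

definition matB1 :: "(nat \<Rightarrow> pt) \<Rightarrow> (nat \<Rightarrow> pt) \<Rightarrow> (nat \<Rightarrow> pt) \<Rightarrow> nat \<Rightarrow> nat \<Rightarrow> real" where
  "matB1 chi chim chip k i =
     indic_diff chi chim chip k i * (chip k - chim k) $ 1 / len chim chip k"

definition matB2 :: "(nat \<Rightarrow> pt) \<Rightarrow> (nat \<Rightarrow> pt) \<Rightarrow> (nat \<Rightarrow> pt) \<Rightarrow> nat \<Rightarrow> nat \<Rightarrow> real" where
  "matB2 chi chim chip k i =
     indic_diff chi chim chip k i * (chip k - chim k) $ 2 / len chim chip k"

definition matD :: "(nat \<Rightarrow> pt) \<Rightarrow> (nat \<Rightarrow> pt) \<Rightarrow> (nat \<Rightarrow> pt) \<Rightarrow> nat \<Rightarrow> nat \<Rightarrow> real" where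
  "matD chi chim chip k i = indic_diff chi chim chip k i"

definition mv :: "nat \<Rightarrow> (nat \<Rightarrow> nat \<Rightarrow> real) \<Rightarrow> (nat \<Rightarrow> real) \<Rightarrow> nat \<Rightarrow> real" where
  "mv n A v k = (\<Sum>i\<in>{1..n}. A k i * v i)"

definition tmv :: "nat \<Rightarrow> (nat \<Rightarrow> nat \<Rightarrow> real) \<Rightarrow> (nat \<Rightarrow> real) \<Rightarrow> nat \<Rightarrow> real" where
  "tmv m A s i = (\<Sum>k\<in>{1..m}. A k i * s k)"

definition inK :: "real \<Rightarrow> real \<Rightarrow> real \<Rightarrow> bool" where
  "inK t1 t2 t3 \<longleftrightarrow> t1 \<ge> 0 \<and> t2 \<ge> 0 \<and> 2 * t1 * t2 \<ge> t3\<^sup>2"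

definition P_feasible ::
  "(nat \<Rightarrow> pt) \<Rightarrow> nat \<Rightarrow> (nat \<Rightarrow> pt) \<Rightarrow> (nat \<Rightarrow> pt) \<Rightarrow> nat \<Rightarrow> (nat \<Rightarrow> real)
   \<Rightarrow> (nat \<Rightarrow> real) \<Rightarrow> (nat \<Rightarrow> real) \<Rightarrow> (nat \<Rightarrow> real) \<Rightarrow> bool" where
  "P_feasible chi n chim chip m f s q r \<longleftrightarrow>
     (\<forall>k\<in>{1..m}. s k \<ge> 0 \<and> r k \<ge> 0 \<and> inK (r k) (s k) (q k)) \<and>
     (\<forall>i\<in>{1..n}. tmv m (matB1 chi chim chip) s i = 0 \<and>
                 tmv m (matB2 chi chim chip) s i = 0 \<and>
                 tmv m (matD chi chim chip) q i = f i)"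

definition P_obj :: "(nat \<Rightarrow> pt) \<Rightarrow> (nat \<Rightarrow> pt) \<Rightarrow> nat \<Rightarrow> (nat \<Rightarrow> real) \<Rightarrow> (nat \<Rightarrow> real) \<Rightarrow> real" where
  "P_obj chim chip m s r =
     (\<Sum>k\<in>{1..m}. len chim chip k * s k) + 2 * (\<Sum>k\<in>{1..m}. len chim chip k * r k)"

definition P_solves ::
  "(nat \<Rightarrow> pt) \<Rightarrow> nat \<Rightarrow> (nat \<Rightarrow> pt) \<Rightarrow> (nat \<Rightarrow> pt) \<Rightarrow> nat \<Rightarrow> (nat \<Rightarrow> real)
   \<Rightarrow> (nat \<Rightarrow> real) \<Rightarrow> (nat \<Rightarrow> real) \<Rightarrow> (nat \<Rightarrow> real) \<Rightarrow> bool" where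
  "P_solves chi n chim chip m f s q r \<longleftrightarrow>
     P_feasible chi n chim chip m f s q r \<and>
     (\<forall>s' q' r'. P_feasible chi n chim chip m f s' q' r' \<longrightarrow>
        P_obj chim chip m s r \<le> P_obj chim chip m s' r')"

definition Z_X :: "(nat \<Rightarrow> pt) \<Rightarrow> nat \<Rightarrow> (nat \<Rightarrow> pt) \<Rightarrow> (nat \<Rightarrow> pt) \<Rightarrow> nat \<Rightarrow> (nat \<Rightarrow> real) \<Rightarrow> real" where
  "Z_X chi n chim chip m f =
     Inf {P_obj chim chip m s r | s q r. P_feasible chi n chim chip m f s q r}"

definition D_feasible ::
  "(nat \<Rightarrow> pt) \<Rightarrow> nat \<Rightarrow> (nat \<Rightarrow> pt) \<Rightarrow> (nat \<Rightarrow> pt) \<Rightarrow> nat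
   \<Rightarrow> (nat \<Rightarrow> real) \<Rightarrow> (nat \<Rightarrow> real) \<Rightarrow> (nat \<Rightarrow> real) \<Rightarrow> bool" where
  "D_feasible chi n chim chip m u1 u2 w \<longleftrightarrow>
     (\<exists>t1 t2 t3 :: nat \<Rightarrow> real. \<forall>k\<in>{1..m}.
        t1 k \<ge> 0 \<and> t2 k \<ge> 0 \<and>
        t2 k + mv n (matB1 chi chim chip) u1 k + mv n (matB2 chi chim chip) u2 k = len chim chip k \<and>
        t3 k + mv n (matD chi chim chip) w k = 0 \<and>
        t1 k = 2 * len chim chip k \<and>
        inK (t1 k) (t2 k) (t3 k))"

definition D_obj :: "nat \<Rightarrow> (nat \<Rightarrow> real) \<Rightarrow> (nat \<Rightarrow> real) \<Rightarrow> real" where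
  "D_obj n f w = (\<Sum>i\<in>{1..n}. f i * w i)"

definition D_solves ::
  "(nat \<Rightarrow> pt) \<Rightarrow> nat \<Rightarrow> (nat \<Rightarrow> pt) \<Rightarrow> (nat \<Rightarrow> pt) \<Rightarrow> nat \<Rightarrow> (nat \<Rightarrow> real)
   \<Rightarrow> (nat \<Rightarrow> real) \<Rightarrow> (nat \<Rightarrow> real) \<Rightarrow> (nat \<Rightarrow> real) \<Rightarrow> bool" where
  "D_solves chi n chim chip m f u1 u2 w \<longleftrightarrow>
     D_feasible chi n chim chip m u1 u2 w \<and>
     (\<forall>u1' u2' w'. D_feasible chi n chim chip m u1' u2' w' \<longrightarrow>
        D_obj n f w' \<le> D_obj n f w)"

definition Delta :: "(nat \<Rightarrow> pt) \<Rightarrow> nat \<Rightarrow> (nat \<Rightarrow> pt) \<Rightarrow> (nat \<Rightarrow> pt) \<Rightarrow> (nat \<Rightarrow> real) \<Rightarrow> nat \<Rightarrow> real" where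
  "Delta chi n chim chip z k = mv n (matD chi chim chip) z k / len chim chip k"

definition Jkk :: "(nat \<Rightarrow> pt) \<Rightarrow> nat \<Rightarrow> (nat \<Rightarrow> pt) \<Rightarrow> (nat \<Rightarrow> pt) \<Rightarrow> (nat \<Rightarrow> real) \<Rightarrow> nat \<Rightarrow> real" where
  "Jkk chi n chim chip z k = sqrt (1 + (Delta chi n chim chip z k)\<^sup>2)"

definition lhat :: "(nat \<Rightarrow> pt) \<Rightarrow> nat \<Rightarrow> (nat \<Rightarrow> pt) \<Rightarrow> (nat \<Rightarrow> pt) \<Rightarrow> (nat \<Rightarrow> real) \<Rightarrow> nat \<Rightarrow> real" where
  "lhat chi n chim chip z k = Jkk chi n chim chip z k * len chim chip k"

definition MVGS_feasible ::
  "(nat \<Rightarrow> pt) \<Rightarrow> nat \<Rightarrow> (nat \<Rightarrow> pt) \<Rightarrow> (nat \<Rightarrow> pt) \<Rightarrow> nat \<Rightarrow> (nat \<Rightarrow> real)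
   \<Rightarrow> (nat \<Rightarrow> real) \<Rightarrow> (nat \<Rightarrow> real) \<Rightarrow> bool" where
  "MVGS_feasible chi n chim chip m f z shat \<longleftrightarrow>
     (\<forall>k\<in>{1..m}. shat k \<ge> 0) \<and>
     (let s = (\<lambda>k. shat k / Jkk chi n chim chip z k);
          q = (\<lambda>k. Delta chi n chim chip z k * shat k / Jkk chi n chim chip z k)
      in \<forall>i\<in>{1..n}. tmv m (matB1 chi chim chip) s i = 0 \<and>
                    tmv m (matB2 chi chim chip) s i = 0 \<and>
                    tmv m (matD chi chim chip) q i = f i)"

definition MVGS_obj :: "(nat \<Rightarrow> pt) \<Rightarrow> nat \<Rightarrow> (nat \<Rightarrow> pt) \<Rightarrow> (nat \<Rightarrow> pt) \<Rightarrow> nat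
   \<Rightarrow> (nat \<Rightarrow> real) \<Rightarrow> (nat \<Rightarrow> real) \<Rightarrow> real" where
  "MVGS_obj chi n chim chip m z shat = (\<Sum>k\<in>{1..m}. lhat chi n chim chip z k * shat k)"

definition MVGS_solves ::
  "(nat \<Rightarrow> pt) \<Rightarrow> nat \<Rightarrow> (nat \<Rightarrow> pt) \<Rightarrow> (nat \<Rightarrow> pt) \<Rightarrow> nat \<Rightarrow> (nat \<Rightarrow> real)
   \<Rightarrow> (nat \<Rightarrow> real) \<Rightarrow> (nat \<Rightarrow> real) \<Rightarrow> bool" where
  "MVGS_solves chi n chim chip m f z shat \<longleftrightarrow>
     MVGS_feasible chi n chim chip m f z shat \<and>
     (\<forall>z' shat'. MVGS_feasible chi n chim chip m f z' shat' \<longrightarrow>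
        MVGS_obj chi n chim chip m z shat \<le> MVGS_obj chi n chim chip m z' shat')"

definition V_min :: "(nat \<Rightarrow> pt) \<Rightarrow> nat \<Rightarrow> (nat \<Rightarrow> pt) \<Rightarrow> (nat \<Rightarrow> pt) \<Rightarrow> nat \<Rightarrow> (nat \<Rightarrow> real) \<Rightarrow> real" where
  "V_min chi n chim chip m f =
     Inf {MVGS_obj chi n chim chip m z shat | z shat. MVGS_feasible chi n chim chip m f z shat}"

end

theory Submission imports Defs begin

lemma farkas_gen:
  fixes a :: "'j \<Rightarrow> 'w \<Rightarrow> real" and c :: "'w \<Rightarrow> real"
    and cmb :: "real \<Rightarrow> 'w \<Rightarrow> real \<Rightarrow> 'w \<Rightarrow> 'w"
  assumes "finite J"
    and "\<forall>j\<in>J. \<forall>\<alpha> e \<beta> d. a j (cmb \<alpha> e \<beta> d) = \<alpha> * a j e + \<beta> * a j d"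
    and "\<forall>\<alpha> e \<beta> d. c (cmb \<alpha> e \<beta> d) = \<alpha> * c e + \<beta> * c d"
  shows "(\<exists>lm. (\<forall>j\<in>J. lm j \<ge> 0) \<and> (\<forall>x. c x = (\<Sum>j\<in>J. lm j * a j x)))
         \<or> (\<exists>d. (\<forall>j\<in>J. a j d \<le> 0) \<and> c d > 0)"
  using assms
proof (induction J arbitrary: a c rule: finite_induct)
  case empty
  show ?case
  proof (cases "\<forall>x. c x = 0")
    case True then show ?thesis by auto
  next
    case False
    then obtain x where x: "c x \<noteq> 0" by auto
    show ?thesis
    proof (cases "c x > 0")
      case True then show ?thesis by auto
    next
      case False
      have "c (cmb (-1) x 0 x) = - c x" using empty.prems(2) by simp
      then have "c (cmb (-1) x 0 x) > 0" using x False by linarith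
      then show ?thesis by blast
    qed
  qed
next
  case (insert j0 J)
  have "(\<exists>lm. (\<forall>j\<in>J. lm j \<ge> 0) \<and> (\<forall>x. c x = (\<Sum>j\<in>J. lm j * a j x)))
         \<or> (\<exists>d. (\<forall>j\<in>J. a j d \<le> 0) \<and> c d > 0)"
    using insert.IH[of a c] insert.prems by auto
  then show ?case
  proof
    assume "\<exists>lm. (\<forall>j\<in>J. lm j \<ge> 0) \<and> (\<forall>x. c x = (\<Sum>j\<in>J. lm j * a j x))"
    then obtain lm where l: "\<forall>j\<in>J. lm j \<ge> 0" "\<forall>x. c x = (\<Sum>j\<in>J. lm j * a j x)" by blast
    define lm' where "lm' = lm(j0 := 0)"
    have "\<forall>j\<in>insert j0 J. lm' j \<ge> 0" using l(1) by (auto simp: lm'_def)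
    moreover have "\<forall>x. c x = (\<Sum>j\<in>insert j0 J. lm' j * a j x)"
    proof
      fix x
      have "(\<Sum>j\<in>insert j0 J. lm' j * a j x) = (\<Sum>j\<in>J. lm' j * a j x)"
        using insert.hyps by (simp add: lm'_def)
      also have "\<dots> = (\<Sum>j\<in>J. lm j * a j x)"
        using insert.hyps by (intro sum.cong) (auto simp: lm'_def)
      finally show "c x = (\<Sum>j\<in>insert j0 J. lm' j * a j x)" using l(2) by simp
    qed
    ultimately show ?thesis by blast
  next
    assume "\<exists>d. (\<forall>j\<in>J. a j d \<le> 0) \<and> c d > 0"
    then obtain d where d: "\<forall>j\<in>J. a j d \<le> 0" "c d > 0" by blast
    show ?thesis
    proof (cases "a j0 d \<le> 0")
      case True then show ?thesis using d by auto
    next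
      case False
      hence ad: "a j0 d > 0" by simp
      define b where "b = (\<lambda>j x. a j0 d * a j x - a j d * a j0 x)"
      define c' where "c' = (\<lambda>x. a j0 d * c x - c d * a j0 x)"
      have lin0: "\<forall>\<alpha> e \<beta> d. a j0 (cmb \<alpha> e \<beta> d) = \<alpha> * a j0 e + \<beta> * a j0 d"
        using insert.prems(1) by auto
      have linb: "\<forall>j\<in>J. \<forall>\<alpha> e \<beta> x. b j (cmb \<alpha> e \<beta> x) = \<alpha> * b j e + \<beta> * b j x"
        using insert.prems(1) lin0 by (auto simp: b_def algebra_simps)
      have linc: "\<forall>\<alpha> e \<beta> x. c' (cmb \<alpha> e \<beta> x) = \<alpha> * c' e + \<beta> * c' x"
        using insert.prems(2) lin0 by (auto simp: c'_def algebra_simps)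
      have "(\<exists>\<mu>. (\<forall>j\<in>J. \<mu> j \<ge> 0) \<and> (\<forall>x. c' x = (\<Sum>j\<in>J. \<mu> j * b j x)))
         \<or> (\<exists>e. (\<forall>j\<in>J. b j e \<le> 0) \<and> c' e > 0)"
        using insert.IH[of b c'] linb linc by auto
      then show ?thesis
      proof
        assume "\<exists>\<mu>. (\<forall>j\<in>J. \<mu> j \<ge> 0) \<and> (\<forall>x. c' x = (\<Sum>j\<in>J. \<mu> j * b j x))"
        then obtain \<mu> where m: "\<forall>j\<in>J. \<mu> j \<ge> 0" "\<forall>x. c' x = (\<Sum>j\<in>J. \<mu> j * b j x)" by blast
        define lm where "lm = (\<lambda>j. if j = j0 then (c d - (\<Sum>j\<in>J. \<mu> j * a j d)) / a j0 d
                                 else \<mu> j)"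
        have s0: "(\<Sum>j\<in>J. \<mu> j * a j d) \<le> 0"
          using m(1) d(1) by (intro sum_nonpos) (simp add: mult_nonneg_nonpos)
        have "\<forall>j\<in>insert j0 J. lm j \<ge> 0"
          using m(1) ad d(2) s0 by (auto simp: lm_def)
        moreover have "\<forall>x. c x = (\<Sum>j\<in>insert j0 J. lm j * a j x)"
        proof
          fix x
          have e1: "a j0 d * c x - c d * a j0 x = (\<Sum>j\<in>J. \<mu> j * (a j0 d * a j x - a j d * a j0 x))"
            using m(2) by (simp add: c'_def b_def)
          also have "\<dots> = a j0 d * (\<Sum>j\<in>J. \<mu> j * a j x) - (\<Sum>j\<in>J. \<mu> j * a j d) * a j0 x"
            by (simp add: sum_distrib_left sum_distrib_right sum_subtractf algebra_simps)
          finally have e2: "a j0 d * c x - c d * a j0 x =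
              a j0 d * (\<Sum>j\<in>J. \<mu> j * a j x) - (\<Sum>j\<in>J. \<mu> j * a j d) * a j0 x" .
          have h1: "(\<Sum>j\<in>insert j0 J. lm j * a j x) = lm j0 * a j0 x + (\<Sum>j\<in>J. lm j * a j x)"
            using insert.hyps by simp
          have h2: "(\<Sum>j\<in>J. lm j * a j x) = (\<Sum>j\<in>J. \<mu> j * a j x)"
            using insert.hyps by (intro sum.cong) (auto simp: lm_def)
          have h4: "lm j0 = (c d - (\<Sum>j\<in>J. \<mu> j * a j d)) / a j0 d" by (simp add: lm_def)
          have key: "\<And>A C D S1 S2 A0 :: real. A > 0 \<Longrightarrow> A * C - D * A0 = A * S1 - S2 * A0 \<Longrightarrow>
                C = (D - S2) / A * A0 + S1"
          proof -
            fix A C D S1 S2 A0 :: real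
            assume A: "A > 0" and E: "A * C - D * A0 = A * S1 - S2 * A0"
            have "A * C = (D - S2) * A0 + A * S1" using E by (simp add: algebra_simps)
            then have "C = ((D - S2) * A0 + A * S1) / A" using A by (simp add: field_simps)
            then show "C = (D - S2) / A * A0 + S1" using A by (simp add: field_simps)
          qed
          show "c x = (\<Sum>j\<in>insert j0 J. lm j * a j x)"
            unfolding h1 h2 h4 by (rule key[OF ad e2])
        qed
        ultimately show ?thesis by blast
      next
        assume "\<exists>e. (\<forall>j\<in>J. b j e \<le> 0) \<and> c' e > 0"
        then obtain e where e: "\<forall>j\<in>J. b j e \<le> 0" "c' e > 0" by blast
        define d' where "d' = cmb (a j0 d) e (- a j0 e) d"
        have "\<forall>j\<in>insert j0 J. a j d' \<le> 0"
          using e(1) insert.prems(1) by (auto simp: d'_def b_def algebra_simps)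
        moreover have "c d' > 0"
          using e(2) insert.prems(2) by (simp add: d'_def c'_def algebra_simps)
        ultimately show ?thesis by blast
      qed
    qed
  qed
qed


lemma mv_lin: "mv n M (\<lambda>i. \<alpha> * e i + \<beta> * d i) k = \<alpha> * mv n M e k + \<beta> * mv n M d k"
  by (simp add: mv_def sum.distrib sum_distrib_left algebra_simps)

lemma mv_zero: "mv n M (\<lambda>i. 0) k = 0"
  by (simp add: mv_def)

lemma mv_half: "mv n M (\<lambda>i. w i / 2) k = mv n M w k / 2"
  by (simp add: mv_def sum_divide_distrib)

lemma mv_plus_scaled: "mv n M (\<lambda>i. v i + \<epsilon> * d i) k = mv n M v k + \<epsilon> * mv n M d k"
  using mv_lin[of n M 1 v \<epsilon> d k] by simp

lemma mv_minus_scaled: "mv n M (\<lambda>i. v i - \<epsilon> * d i) k = mv n M v k - \<epsilon> * mv n M d k"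
  using mv_lin[of n M 1 v "-\<epsilon>" d k] by simp

lemma mv_delta: "i \<in> {1..n} \<Longrightarrow> mv n M (\<lambda>j. if j = i then 1 else 0) k = M k i"
  by (simp add: mv_def if_distrib cong: if_cong)

lemma sum_delta_f: "i \<in> {1..(n::nat)} \<Longrightarrow> (\<Sum>j\<in>{1..n}. f j * (if j = i then 1 else 0)) = (f i::real)"
proof -
  assume i: "i \<in> {1..n}"
  have "(\<Sum>j\<in>{1..n}. f j * (if j = i then 1 else 0)) = (\<Sum>j\<in>{1..n}. if j = i then f j else 0)"
    by (rule sum.cong) auto
  also have "\<dots> = f i" using i by (subst sum.delta) auto
  finally show ?thesis .
qed

lemma sum_swap_mv: "(\<Sum>k\<in>{1..m}. x k * mv n M v k) = (\<Sum>i\<in>{1..n}. v i * tmv m M x i)"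
  unfolding mv_def tmv_def
  by (simp add: sum_distrib_left sum_distrib_right algebra_simps) (rule sum.swap)

lemma cone_pair:
  fixes s r q L t2 W :: real
  assumes "s \<ge> 0" "r \<ge> 0" "2 * r * s \<ge> q^2" "L > 0" "4 * L * t2 \<ge> W^2"
  shows "s * t2 + 2 * L * r - q * W \<ge> 0" and "s * t2 + 2 * L * r - q * W = 0 \<Longrightarrow> 2 * L * q = s * W"
proof -
  have both: "s * t2 + 2 * L * r - q * W \<ge> 0 \<and> (s * t2 + 2 * L * r - q * W = 0 \<longrightarrow> 2 * L * q = s * W)"
  proof (cases "s = 0")
    case True
    then have "q^2 \<le> 0" using assms(3) by simp
    then have "q^2 = 0" using zero_le_power2[of q] by linarith
    then have "q = 0" by simp
    then show ?thesis using True assms by simp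
  next
    case False
    then have sp: "s > 0" using assms(1) by simp
    have a1: "s^2 * (4 * L * t2) \<ge> s^2 * W^2" by (rule mult_left_mono[OF assms(5)]) simp
    have a2: "(2 * L^2) * (2 * r * s) \<ge> (2 * L^2) * q^2" by (rule mult_left_mono[OF assms(3)]) simp
    have id: "2 * L * s * (s * t2 + 2 * L * r - q * W) = (s^2 * (4 * L * t2))/2 + (2 * L^2) * (2 * r * s) - 2 * L * s * q * W"
      by (simp add: algebra_simps power2_eq_square)
    have sq: "(s * W - 2 * L * q)^2 = s^2 * W^2 + 4 * L^2 * q^2 - 4 * L * s * q * W"
      by (simp add: algebra_simps power2_eq_square)
    have main: "2 * L * s * (s * t2 + 2 * L * r - q * W) \<ge> (s * W - 2 * L * q)^2 / 2"
      using a1 a2 id sq by linarith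
    have pos: "2 * L * s > 0" using sp assms(4) by simp
    have g0: "(s * W - 2 * L * q)^2 / 2 \<ge> 0" by simp
    have t0: "s * t2 + 2 * L * r - q * W \<ge> 0"
      using main g0 pos by (meson dual_order.trans zero_le_mult_iff not_less)
    moreover have "s * t2 + 2 * L * r - q * W = 0 \<longrightarrow> 2 * L * q = s * W"
    proof
      assume "s * t2 + 2 * L * r - q * W = 0"
      then have "(s * W - 2 * L * q)^2 \<le> 0" using main by simp
      then have "(s * W - 2 * L * q)^2 = 0" using zero_le_power2[of "s * W - 2 * L * q"] by linarith
      then have "s * W - 2 * L * q = 0" by simp
      then show "2 * L * q = s * W" by simp
    qed
    ultimately show ?thesis by blast
  qed
  then show "s * t2 + 2 * L * r - q * W \<ge> 0" and "s * t2 + 2 * L * r - q * W = 0 \<Longrightarrow> 2 * L * q = s * W" by auto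
qed

lemma len_pos:
  assumes pairs: "bij_betw (\<lambda>k. {chim k, chip k}) {1..m} {{p, p'} | p p'. p \<in> X \<and> p' \<in> X \<and> p \<noteq> p'}"
    and k: "k \<in> {1..m}"
  shows "len chim chip k > 0"
proof -
  have "{chim k, chip k} \<in> {{p, p'} | p p'. p \<in> X \<and> p' \<in> X \<and> p \<noteq> p'}"
    using bij_betw_imp_surj_on[OF pairs] k by blast
  then obtain p p' where "{chim k, chip k} = {p, p'}" "p \<noteq> p'" by blast
  then have "chim k \<noteq> chip k" by (metis doubleton_eq_iff insert_absorb2 singleton_insert_inj_eq)
  then show ?thesis by (simp add: len_def)
qed

lemma Dfeas_iff:
  assumes "\<forall>k\<in>{1..m}. len chim chip k > 0"
  shows "D_feasible chi n chim chip m u1 u2 w \<longleftrightarrow>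
    (\<forall>k\<in>{1..m}. (mv n (matD chi chim chip) w k)^2
        - 4 * len chim chip k * (len chim chip k - (mv n (matB1 chi chim chip) u1 k + mv n (matB2 chi chim chip) u2 k)) \<le> 0)"
proof
  assume "D_feasible chi n chim chip m u1 u2 w"
  then obtain t1 t2 t3 where t: "\<forall>k\<in>{1..m}.
        t1 k \<ge> 0 \<and> t2 k \<ge> 0 \<and>
        t2 k + mv n (matB1 chi chim chip) u1 k + mv n (matB2 chi chim chip) u2 k = len chim chip k \<and>
        t3 k + mv n (matD chi chim chip) w k = 0 \<and>
        t1 k = 2 * len chim chip k \<and>
        inK (t1 k) (t2 k) (t3 k)" unfolding D_feasible_def by blast
  show "\<forall>k\<in>{1..m}. (mv n (matD chi chim chip) w k)^2
        - 4 * len chim chip k * (len chim chip k - (mv n (matB1 chi chim chip) u1 k + mv n (matB2 chi chim chip) u2 k)) \<le> 0"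
  proof
    fix k assume k: "k \<in> {1..m}"
    have tk: "t1 k \<ge> 0 \<and> t2 k \<ge> 0 \<and>
        t2 k + mv n (matB1 chi chim chip) u1 k + mv n (matB2 chi chim chip) u2 k = len chim chip k \<and>
        t3 k + mv n (matD chi chim chip) w k = 0 \<and>
        t1 k = 2 * len chim chip k \<and>
        inK (t1 k) (t2 k) (t3 k)" using t k by blast
    have t3: "t3 k = - mv n (matD chi chim chip) w k" using tk by linarith
    have t2: "t2 k = len chim chip k - (mv n (matB1 chi chim chip) u1 k + mv n (matB2 chi chim chip) u2 k)" using tk by linarith
    have "2 * t1 k * t2 k \<ge> (t3 k)^2" using tk by (auto simp: inK_def)
    then show "(mv n (matD chi chim chip) w k)^2
        - 4 * len chim chip k * (len chim chip k - (mv n (matB1 chi chim chip) u1 k + mv n (matB2 chi chim chip) u2 k)) \<le> 0"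
      using tk t2 t3 by (auto simp: power2_eq_square)
  qed
next
  assume H: "\<forall>k\<in>{1..m}. (mv n (matD chi chim chip) w k)^2
        - 4 * len chim chip k * (len chim chip k - (mv n (matB1 chi chim chip) u1 k + mv n (matB2 chi chim chip) u2 k)) \<le> 0"
  show "D_feasible chi n chim chip m u1 u2 w"
    unfolding D_feasible_def
  proof (intro exI ballI conjI)
    fix k assume k: "k \<in> {1..m}"
    let ?t2 = "len chim chip k - (mv n (matB1 chi chim chip) u1 k + mv n (matB2 chi chim chip) u2 k)"
    have L: "len chim chip k > 0" using assms k by auto
    have h: "(mv n (matD chi chim chip) w k)^2 \<le> 4 * len chim chip k * ?t2" using H k by auto
    have "0 \<le> 4 * len chim chip k * ?t2" using h by (meson order_trans zero_le_power2)
    then have t2p: "?t2 \<ge> 0" using L by (simp add: zero_le_mult_iff)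
    show "0 \<le> 2 * len chim chip k" using L by simp
    show "0 \<le> (\<lambda>k. len chim chip k - (mv n (matB1 chi chim chip) u1 k + mv n (matB2 chi chim chip) u2 k)) k"
      using t2p by simp
    show "(\<lambda>k. len chim chip k - (mv n (matB1 chi chim chip) u1 k + mv n (matB2 chi chim chip) u2 k)) k
       + mv n (matB1 chi chim chip) u1 k + mv n (matB2 chi chim chip) u2 k = len chim chip k" by simp
    show "(\<lambda>k. - mv n (matD chi chim chip) w k) k + mv n (matD chi chim chip) w k = 0" by simp
    show "2 * len chim chip k = 2 * len chim chip k" by simp
    show "inK (2 * len chim chip k) ((\<lambda>k. len chim chip k - (mv n (matB1 chi chim chip) u1 k + mv n (matB2 chi chim chip) u2 k)) k)
       ((\<lambda>k. - mv n (matD chi chim chip) w k) k)"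
      using h t2p L by (simp add: inK_def power2_eq_square algebra_simps)
  qed
qed

lemma finite_pos_lb:
  fixes p :: "'a \<Rightarrow> real"
  assumes "finite K" "\<forall>k\<in>K. p k > 0"
  shows "\<exists>\<eta>>0. \<forall>k\<in>K. \<eta> \<le> p k"
proof (cases "K = {}")
  case True then show ?thesis by (intro exI[of _ 1]) auto
next
  case False
  have "Min (p ` K) \<in> p ` K" using assms(1) False by (intro Min_in) auto
  then have "Min (p ` K) > 0" using assms(2) by auto
  moreover have "\<forall>k\<in>K. Min (p ` K) \<le> p k" using assms(1) by auto
  ultimately show ?thesis by blast
qed

lemma Jkk_pos: "Jkk chi n chim chip z k > 0"
  unfolding Jkk_def by (simp add: add_pos_nonneg)

lemma Jkk_sq: "(Jkk chi n chim chip z k)^2 = 1 + (Delta chi n chim chip z k)^2"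
  unfolding Jkk_def by (simp add: add_nonneg_nonneg)

theorem theorem6p2:
  fixes \<Omega> X :: "pt set" and fX :: "pt \<Rightarrow> real"
    and chi chim chip :: "nat \<Rightarrow> pt" and n m :: nat
    and s q r u1 u2 w :: "nat \<Rightarrow> real"
  assumes dom: "open \<Omega>" "connected \<Omega>" "bounded \<Omega>" "\<Omega> \<noteq> {}"
    and X: "finite X" "X \<subseteq> closure \<Omega>"
       "X - frontier \<Omega> \<subseteq> interior (convex hull (X \<inter> frontier \<Omega>))"
    and n_def: "n = card (X - frontier \<Omega>)"
    and chi: "bij_betw chi {1..n} (X - frontier \<Omega>)"
    and m_def: "m = card X * (card X - 1) div 2"
    and pairs: "bij_betw (\<lambda>k. {chim k, chip k}) {1..m} {{p, p'} | p p'. p \<in> X \<and> p' \<in> X \<and> p \<noteq> p'}"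
    and primal: "P_solves chi n chim chip m (\<lambda>i. fX (chi i)) s q r"
    and dual: "D_solves chi n chim chip m (\<lambda>i. fX (chi i)) u1 u2 w"
  shows "MVGS_solves chi n chim chip m (\<lambda>i. fX (chi i)) (\<lambda>i. w i / 2)
           (\<lambda>k. Jkk chi n chim chip (\<lambda>i. w i / 2) k * s k)
       \<and> V_min chi n chim chip m (\<lambda>i. fX (chi i)) = Z_X chi n chim chip m (\<lambda>i. fX (chi i))"
proof -
  define f where "f = (\<lambda>i. fX (chi i))"
  define L where "L = len chim chip"
  define B1 where "B1 = matB1 chi chim chip"
  define B2 where "B2 = matB2 chi chim chip"
  define D where "D = matD chi chim chip"
  have Lpos0: "\<forall>k\<in>{1..m}. len chim chip k > 0" using len_pos[OF pairs] by auto
  have Lpos: "\<forall>k\<in>{1..m}. L k > 0" using Lpos0 by (simp add: L_def)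
  have pfeas: "P_feasible chi n chim chip m f s q r"
    and popt: "\<And>s' q' r'. P_feasible chi n chim chip m f s' q' r' \<Longrightarrow>
                 P_obj chim chip m s r \<le> P_obj chim chip m s' r'"
    using primal by (auto simp: P_solves_def f_def)
  have dfeas: "D_feasible chi n chim chip m u1 u2 w"
    and dopt: "\<And>u1' u2' w'. D_feasible chi n chim chip m u1' u2' w' \<Longrightarrow> D_obj n f w' \<le> D_obj n f w"
    using dual by (auto simp: D_solves_def f_def)
  note Dfi = Dfeas_iff[OF Lpos0]
  define Bu where "Bu = (\<lambda>k. mv n B1 u1 k + mv n B2 u2 k)"
  define Dw where "Dw = (\<lambda>k. mv n D w k)"
  define g where "g = (\<lambda>k. (Dw k)^2 - 4 * L k * (L k - Bu k))"
  have gle: "\<forall>k\<in>{1..m}. g k \<le> 0"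
    using Dfi[THEN iffD1, OF dfeas] by (simp add: g_def Dw_def Bu_def L_def B1_def B2_def D_def)
  have ps: "\<forall>k\<in>{1..m}. s k \<ge> 0 \<and> r k \<ge> 0 \<and> inK (r k) (s k) (q k)"
    and pB: "\<forall>i\<in>{1..n}. tmv m B1 s i = 0 \<and> tmv m B2 s i = 0 \<and> tmv m D q i = f i"
    using pfeas by (auto simp: P_feasible_def B1_def B2_def D_def)
  have sBu0: "\<And>x. (\<forall>i\<in>{1..n}. tmv m B1 x i = 0 \<and> tmv m B2 x i = 0) \<Longrightarrow> (\<Sum>k\<in>{1..m}. x k * Bu k) = 0"
  proof -
    fix x assume H: "\<forall>i\<in>{1..n}. tmv m B1 x i = 0 \<and> tmv m B2 x i = 0"
    have "(\<Sum>k\<in>{1..m}. x k * Bu k) = (\<Sum>k\<in>{1..m}. x k * mv n B1 u1 k) + (\<Sum>k\<in>{1..m}. x k * mv n B2 u2 k)"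
      by (simp add: Bu_def distrib_left sum.distrib)
    also have "\<dots> = (\<Sum>i\<in>{1..n}. u1 i * tmv m B1 x i) + (\<Sum>i\<in>{1..n}. u2 i * tmv m B2 x i)"
      by (simp only: sum_swap_mv)
    also have "\<dots> = 0" using H by simp
    finally show "(\<Sum>k\<in>{1..m}. x k * Bu k) = 0" .
  qed
  have qDw: "\<And>x. (\<forall>i\<in>{1..n}. tmv m D x i = f i) \<Longrightarrow> (\<Sum>k\<in>{1..m}. x k * Dw k) = D_obj n f w"
  proof -
    fix x assume H: "\<forall>i\<in>{1..n}. tmv m D x i = f i"
    have "(\<Sum>k\<in>{1..m}. x k * Dw k) = (\<Sum>i\<in>{1..n}. w i * tmv m D x i)"
      unfolding Dw_def by (simp only: sum_swap_mv)
    also have "\<dots> = (\<Sum>i\<in>{1..n}. f i * w i)" using H by (intro sum.cong) auto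
    finally show "(\<Sum>k\<in>{1..m}. x k * Dw k) = D_obj n f w" by (simp add: D_obj_def)
  qed
  have Pobj_eq: "\<And>s' r'. P_obj chim chip m s' r' = (\<Sum>k\<in>{1..m}. L k * s' k + 2 * (L k * r' k))"
    by (simp add: P_obj_def L_def sum.distrib sum_distrib_left)
  have strong: "P_obj chim chip m s r \<le> D_obj n f w"
  proof -
    define A where "A = {k\<in>{1..m}. g k = 0}"
    define a where "a = (\<lambda>k (x::(nat\<Rightarrow>real)\<times>(nat\<Rightarrow>real)\<times>(nat\<Rightarrow>real)).
        2 * Dw k * mv n D (snd (snd x)) k + 4 * L k * (mv n B1 (fst x) k + mv n B2 (fst (snd x)) k))"
    define c where "c = (\<lambda>x::(nat\<Rightarrow>real)\<times>(nat\<Rightarrow>real)\<times>(nat\<Rightarrow>real). \<Sum>i\<in>{1..n}. f i * snd (snd x) i)"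
    define cmb where "cmb = (\<lambda>\<alpha> (e::(nat\<Rightarrow>real)\<times>(nat\<Rightarrow>real)\<times>(nat\<Rightarrow>real)) \<beta> d.
        ((\<lambda>i. \<alpha> * fst e i + \<beta> * fst d i), (\<lambda>i. \<alpha> * fst (snd e) i + \<beta> * fst (snd d) i),
         (\<lambda>i. \<alpha> * snd (snd e) i + \<beta> * snd (snd d) i)))"
    have fin: "finite A" by (simp add: A_def)
    have la: "\<forall>j\<in>A. \<forall>\<alpha> e \<beta> d. a j (cmb \<alpha> e \<beta> d) = \<alpha> * a j e + \<beta> * a j d"
      by (simp add: a_def cmb_def mv_lin algebra_simps)
    have lc: "\<forall>\<alpha> e \<beta> d. c (cmb \<alpha> e \<beta> d) = \<alpha> * c e + \<beta> * c d"
      by (simp add: c_def cmb_def sum.distrib sum_distrib_left algebra_simps)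
    from farkas_gen[OF fin la lc] show ?thesis
    proof
      assume "\<exists>lm. (\<forall>j\<in>A. lm j \<ge> 0) \<and> (\<forall>x. c x = (\<Sum>j\<in>A. lm j * a j x))"
      then obtain lm where lm: "\<forall>j\<in>A. lm j \<ge> 0" "\<forall>x. c x = (\<Sum>j\<in>A. lm j * a j x)" by blast
      define \<Lambda> where "\<Lambda> = (\<lambda>k. if k \<in> A then lm k else 0)"
      have \<Lambda>0: "\<And>k. \<Lambda> k \<ge> 0" using lm(1) by (simp add: \<Lambda>_def)
      have \<Lambda>A: "\<And>k. \<Lambda> k \<noteq> 0 \<Longrightarrow> k \<in> A" by (simp add: \<Lambda>_def split: if_splits)
      have cx: "\<And>x. c x = (\<Sum>k\<in>{1..m}. \<Lambda> k * a k x)"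
      proof -
        fix x
        have "(\<Sum>k\<in>{1..m}. \<Lambda> k * a k x) = (\<Sum>k\<in>A. lm k * a k x)"
          by (rule sum.mono_neutral_cong_right) (auto simp: A_def \<Lambda>_def)
        then show "c x = (\<Sum>k\<in>{1..m}. \<Lambda> k * a k x)" using spec[OF lm(2), of x] by simp
      qed
      define s2 where "s2 = (\<lambda>k. 4 * L k * \<Lambda> k)"
      define q2 where "q2 = (\<lambda>k. 2 * \<Lambda> k * Dw k)"
      define r2 where "r2 = (\<lambda>k. \<Lambda> k * (Dw k)^2 / (2 * L k))"
      define z0 where "z0 = (\<lambda>j::nat. 0::real)"
      have tB: "\<forall>i\<in>{1..n}. tmv m B1 s2 i = 0 \<and> tmv m B2 s2 i = 0 \<and> tmv m D q2 i = f i"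
      proof
        fix i assume i: "i \<in> {1..n}"
        define \<delta> where "\<delta> = (\<lambda>j::nat. if j = i then 1 else (0::real))"
        have h1: "c (\<delta>, z0, z0) = 0" by (simp add: c_def z0_def)
        have h2: "\<And>k. a k (\<delta>, z0, z0) = 4 * L k * B1 k i"
          using mv_zero unfolding a_def z0_def \<delta>_def by (simp add: mv_delta[OF i])
        have e1: "0 = (\<Sum>k\<in>{1..m}. \<Lambda> k * (4 * L k * B1 k i))"
          using cx[of "(\<delta>, z0, z0)"] unfolding h1 h2 .
        have h3: "c (z0, \<delta>, z0) = 0" by (simp add: c_def z0_def)
        have h4: "\<And>k. a k (z0, \<delta>, z0) = 4 * L k * B2 k i"
          using mv_zero unfolding a_def z0_def \<delta>_def by (simp add: mv_delta[OF i])
        have e2: "0 = (\<Sum>k\<in>{1..m}. \<Lambda> k * (4 * L k * B2 k i))"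
          using cx[of "(z0, \<delta>, z0)"] unfolding h3 h4 .
        have h5: "c (z0, z0, \<delta>) = f i" using sum_delta_f[OF i, of f] by (simp add: c_def \<delta>_def)
        have h6: "\<And>k. a k (z0, z0, \<delta>) = 2 * Dw k * D k i"
          using mv_zero unfolding a_def z0_def \<delta>_def by (simp add: mv_delta[OF i])
        have e3: "f i = (\<Sum>k\<in>{1..m}. \<Lambda> k * (2 * Dw k * D k i))"
          using cx[of "(z0, z0, \<delta>)"] unfolding h5 h6 .
        show "tmv m B1 s2 i = 0 \<and> tmv m B2 s2 i = 0 \<and> tmv m D q2 i = f i"
          unfolding tmv_def s2_def q2_def using e1 e2 e3
          by (simp add: algebra_simps)
      qed
      have pf2: "P_feasible chi n chim chip m f s2 q2 r2"
        unfolding P_feasible_def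
      proof (intro conjI ballI)
        fix k assume k: "k \<in> {1..m}"
        have Lk: "L k > 0" using Lpos k by auto
        show "s2 k \<ge> 0" using Lk \<Lambda>0[of k] by (simp add: s2_def)
        show "r2 k \<ge> 0" using Lk \<Lambda>0[of k] by (simp add: r2_def)
        have "2 * r2 k * s2 k = (q2 k)^2" using Lk
          by (simp add: r2_def s2_def q2_def field_simps power2_eq_square)
        then show "inK (r2 k) (s2 k) (q2 k)" using Lk \<Lambda>0[of k]
          by (simp add: inK_def r2_def s2_def)
      next
        fix i assume i: "i \<in> {1..n}"
        show "tmv m (matB1 chi chim chip) s2 i = 0" "tmv m (matB2 chi chim chip) s2 i = 0"
             "tmv m (matD chi chim chip) q2 i = f i"
          using tB i by (auto simp: B1_def B2_def D_def)
      qed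
      have "P_obj chim chip m s r \<le> P_obj chim chip m s2 r2" by (rule popt[OF pf2])
      also have "P_obj chim chip m s2 r2 = (\<Sum>k\<in>{1..m}. q2 k * Dw k + s2 k * Bu k)"
        unfolding Pobj_eq
      proof (rule sum.cong)
        fix k assume k: "k \<in> {1..m}"
        have Lk: "L k > 0" using Lpos k by auto
        have gk: "\<Lambda> k * g k = 0" using \<Lambda>A[of k] by (cases "\<Lambda> k = 0") (auto simp: A_def)
        show "L k * s2 k + 2 * (L k * r2 k) = q2 k * Dw k + s2 k * Bu k"
          using Lk gk by (simp add: s2_def r2_def q2_def g_def field_simps power2_eq_square)
      qed simp
      also have "\<dots> = (\<Sum>k\<in>{1..m}. q2 k * Dw k) + (\<Sum>k\<in>{1..m}. s2 k * Bu k)"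
        by (simp add: sum.distrib)
      also have "\<dots> = D_obj n f w"
        using qDw[of q2] sBu0[of s2] tB by simp
      finally show ?thesis .
    next
      assume "\<exists>d. (\<forall>j\<in>A. a j d \<le> 0) \<and> c d > 0"
      then obtain d where d: "\<forall>j\<in>A. a j d \<le> 0" "c d > 0" by blast
      obtain d1 d2 d3 where dd: "d = (d1, d2, d3)" by (cases d) auto
      define W where "W = D_obj n f w"
      define \<delta> where "\<delta> = c d / (2 * (\<bar>W\<bar> + 1))"
      have \<delta>p: "\<delta> > 0" using d(2) by (simp add: \<delta>_def add_pos_nonneg)
      define e1 where "e1 = (\<lambda>i. d1 i - \<delta> * u1 i)"
      define e2 where "e2 = (\<lambda>i. d2 i - \<delta> * u2 i)"
      define e3 where "e3 = (\<lambda>i. d3 i - \<delta> * w i)"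
      define La where "La = (\<lambda>k. 2 * Dw k * mv n D e3 k + 4 * L k * (mv n B1 e1 k + mv n B2 e2 k))"
      have La_eq: "\<And>k. La k = a k d - \<delta> * (2 * (Dw k)^2 + 4 * L k * Bu k)"
        by (simp add: La_def a_def dd e1_def e2_def e3_def mv_minus_scaled Dw_def Bu_def
              algebra_simps power2_eq_square)
      have LaA: "\<forall>k\<in>A. La k < 0"
      proof
        fix k assume k: "k \<in> A"
        have Lk: "L k > 0" using Lpos k by (auto simp: A_def)
        have "g k = 0" using k by (simp add: A_def)
        then have "2 * (Dw k)^2 + 4 * L k * Bu k = (Dw k)^2 + 4 * (L k)^2"
          by (simp add: g_def algebra_simps power2_eq_square)
        moreover have "(Dw k)^2 + 4 * (L k)^2 > 0" using Lk by (simp add: add_nonneg_pos)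
        ultimately have "\<delta> * (2 * (Dw k)^2 + 4 * L k * Bu k) > 0" using \<delta>p by simp
        then show "La k < 0" using La_eq[of k] d(1) k by fastforce
      qed
      have ce: "(\<Sum>i\<in>{1..n}. f i * e3 i) = c d - \<delta> * W"
        by (simp add: e3_def c_def dd W_def D_obj_def right_diff_distrib sum_subtractf sum_distrib_left algebra_simps)
      have "\<delta> * W \<le> \<delta> * \<bar>W\<bar>" using \<delta>p by (simp add: mult_left_mono)
      moreover have "\<delta> * \<bar>W\<bar> < c d / 2"
      proof -
        have "\<delta> * \<bar>W\<bar> = c d * (\<bar>W\<bar> / (2 * (\<bar>W\<bar> + 1)))" by (simp add: \<delta>_def)
        also have "\<dots> < c d * (1/2)"
          using d(2) by (intro mult_strict_left_mono) (auto simp: field_simps)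
        finally show ?thesis by simp
      qed
      ultimately have cep: "(\<Sum>i\<in>{1..n}. f i * e3 i) > 0" using ce d(2) by linarith
      define Q where "Q = (\<lambda>k. (mv n D e3 k)^2)"
      have "\<forall>k\<in>{1..m}. (if k \<in> A then - La k else - g k) > 0"
      proof
        fix k assume k: "k \<in> {1..m}"
        show "(if k \<in> A then - La k else - g k) > 0"
        proof (cases "k \<in> A")
          case True then show ?thesis using LaA by simp
        next
          case False
          then have "g k \<noteq> 0" using k by (simp add: A_def)
          moreover have "g k \<le> 0" using gle k by blast
          ultimately show ?thesis using False by simp
        qed
      qed
      then obtain \<eta> where \<eta>: "\<eta> > 0" "\<forall>k\<in>{1..m}. \<eta> \<le> (if k \<in> A then - La k else - g k)"
        using finite_pos_lb[of "{1..m}" "\<lambda>k. if k \<in> A then - La k else - g k"] by auto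
      define S where "S = (\<Sum>k\<in>{1..m}. \<bar>La k\<bar> + Q k) + 1"
      have Sk: "\<And>k. k \<in> {1..m} \<Longrightarrow> \<bar>La k\<bar> + Q k \<le> S"
      proof -
        fix k assume k: "k \<in> {1..m}"
        have "\<bar>La k\<bar> + Q k \<le> (\<Sum>k\<in>{1..m}. \<bar>La k\<bar> + Q k)"
          using k by (intro member_le_sum) (auto simp: Q_def)
        then show "\<bar>La k\<bar> + Q k \<le> S" by (simp add: S_def)
      qed
      have Sp: "S \<ge> 1" unfolding S_def by (simp add: sum_nonneg Q_def)
      define \<epsilon> where "\<epsilon> = min 1 (\<eta> / S)"
      have \<epsilon>p: "\<epsilon> > 0" using \<eta>(1) Sp by (simp add: \<epsilon>_def)
      have \<epsilon>1: "\<epsilon> \<le> 1" by (simp add: \<epsilon>_def)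
      have \<epsilon>S: "\<epsilon> * S \<le> \<eta>"
      proof -
        have "\<epsilon> * S \<le> (\<eta> / S) * S" using Sp by (intro mult_right_mono) (auto simp: \<epsilon>_def)
        then show ?thesis using Sp by simp
      qed
      define v1 where "v1 = (\<lambda>i. u1 i + \<epsilon> * e1 i)"
      define v2 where "v2 = (\<lambda>i. u2 i + \<epsilon> * e2 i)"
      define v3 where "v3 = (\<lambda>i. w i + \<epsilon> * e3 i)"
      have gnew: "\<And>k. (mv n D v3 k)^2 - 4 * L k * (L k - (mv n B1 v1 k + mv n B2 v2 k))
                   = g k + \<epsilon> * La k + \<epsilon>^2 * Q k"
        by (simp add: v1_def v2_def v3_def mv_plus_scaled g_def La_def Q_def Dw_def Bu_def
             algebra_simps power2_eq_square)
      have "\<forall>k\<in>{1..m}. (mv n D v3 k)^2 - 4 * L k * (L k - (mv n B1 v1 k + mv n B2 v2 k)) \<le> 0"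
      proof
        fix k assume k: "k \<in> {1..m}"
        have Qn: "Q k \<ge> 0" by (simp add: Q_def)
        have ES: "\<epsilon> * (\<bar>La k\<bar> + Q k) \<le> \<eta>"
          using Sk[OF k] \<epsilon>p \<epsilon>S by (meson mult_left_mono less_imp_le order_trans)
        show "(mv n D v3 k)^2 - 4 * L k * (L k - (mv n B1 v1 k + mv n B2 v2 k)) \<le> 0"
        proof (cases "k \<in> A")
          case True
          have gk: "g k = 0" using True by (simp add: A_def)
          have "\<eta> \<le> - La k" using bspec[OF \<eta>(2) k] True by simp
          have "\<epsilon> * Q k \<le> \<eta>" using ES \<epsilon>p by (smt (verit) mult_nonneg_nonneg abs_ge_zero distrib_left)
          then have "La k + \<epsilon> * Q k \<le> 0" using \<open>\<eta> \<le> - La k\<close> by linarith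
          then have "\<epsilon> * (La k + \<epsilon> * Q k) \<le> 0" using \<epsilon>p by (simp add: mult_nonneg_nonpos)
          then show ?thesis unfolding gnew gk by (simp add: algebra_simps power2_eq_square)
        next
          case False
          have "\<eta> \<le> - g k" using bspec[OF \<eta>(2) k] False by simp
          have "\<epsilon>^2 * Q k \<le> \<epsilon> * Q k"
            using \<epsilon>p \<epsilon>1 Qn by (simp add: power2_eq_square mult_right_mono mult_left_le_one_le)
          moreover have "\<epsilon> * La k \<le> \<epsilon> * \<bar>La k\<bar>" using \<epsilon>p by (simp add: mult_left_mono)
          ultimately have "\<epsilon> * La k + \<epsilon>^2 * Q k \<le> \<epsilon> * (\<bar>La k\<bar> + Q k)" by (simp add: algebra_simps)
          then show ?thesis unfolding gnew using ES \<open>\<eta> \<le> - g k\<close> by linarith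
        qed
      qed
      then have "D_feasible chi n chim chip m v1 v2 v3"
        unfolding Dfeas_iff[OF Lpos0] by (simp add: L_def B1_def B2_def D_def)
      then have "D_obj n f v3 \<le> D_obj n f w" by (rule dopt)
      moreover have "D_obj n f v3 = D_obj n f w + \<epsilon> * (\<Sum>i\<in>{1..n}. f i * e3 i)"
        by (simp add: D_obj_def v3_def sum.distrib sum_distrib_left algebra_simps)
      moreover have "\<epsilon> * (\<Sum>i\<in>{1..n}. f i * e3 i) > 0" using \<epsilon>p cep by simp
      ultimately show ?thesis by linarith
    qed
  qed
  have W_eq: "D_obj n f w = (\<Sum>k\<in>{1..m}. q k * Dw k)" using qDw[of q] pB by simp
  have sB0: "(\<Sum>k\<in>{1..m}. s k * Bu k) = 0" using sBu0[of s] pB by simp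
  have terms: "\<forall>k\<in>{1..m}. s k * (L k - Bu k) + 2 * L k * r k - q k * Dw k \<ge> 0 \<and>
      (s k * (L k - Bu k) + 2 * L k * r k - q k * Dw k = 0 \<longrightarrow> 2 * L k * q k = s k * Dw k)"
  proof
    fix k assume k: "k \<in> {1..m}"
    have Lk: "L k > 0" using Lpos k by auto
    have pk: "s k \<ge> 0" "r k \<ge> 0" "2 * r k * s k \<ge> (q k)^2" using ps k by (auto simp: inK_def)
    have "4 * L k * (L k - Bu k) \<ge> (Dw k)^2" using gle k by (auto simp: g_def)
    from cone_pair[OF pk Lk this] show "s k * (L k - Bu k) + 2 * L k * r k - q k * Dw k \<ge> 0 \<and>
      (s k * (L k - Bu k) + 2 * L k * r k - q k * Dw k = 0 \<longrightarrow> 2 * L k * q k = s k * Dw k)" by blast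
  qed
  have diff: "P_obj chim chip m s r - D_obj n f w =
      (\<Sum>k\<in>{1..m}. s k * (L k - Bu k) + 2 * L k * r k - q k * Dw k)"
  proof -
    have "(\<Sum>k\<in>{1..m}. s k * (L k - Bu k) + 2 * L k * r k - q k * Dw k) =
        (\<Sum>k\<in>{1..m}. L k * s k + 2 * (L k * r k)) - (\<Sum>k\<in>{1..m}. q k * Dw k) - (\<Sum>k\<in>{1..m}. s k * Bu k)"
      by (simp add: sum_subtractf[symmetric] algebra_simps)
    then show ?thesis using W_eq sB0 Pobj_eq[of s r] by simp
  qed
  have "(\<Sum>k\<in>{1..m}. s k * (L k - Bu k) + 2 * L k * r k - q k * Dw k) \<le> 0"
    using diff strong by linarith
  moreover have "(\<Sum>k\<in>{1..m}. s k * (L k - Bu k) + 2 * L k * r k - q k * Dw k) \<ge> 0"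
    using terms by (intro sum_nonneg) blast
  ultimately have "(\<Sum>k\<in>{1..m}. s k * (L k - Bu k) + 2 * L k * r k - q k * Dw k) = 0" by linarith
  then have "\<forall>k\<in>{1..m}. s k * (L k - Bu k) + 2 * L k * r k - q k * Dw k = 0"
    using terms by (subst (asm) sum_nonneg_eq_0_iff) auto
  then have compl: "\<forall>k\<in>{1..m}. 2 * L k * q k = s k * Dw k" using terms by blast
  define z0 where "z0 = (\<lambda>i. w i / 2)"
  define J0 where "J0 = Jkk chi n chim chip z0"
  define \<Delta>0 where "\<Delta>0 = Delta chi n chim chip z0"
  have \<Delta>0_eq: "\<And>k. \<Delta>0 k = Dw k / (2 * L k)"
    by (simp add: \<Delta>0_def Delta_def z0_def mv_half Dw_def D_def L_def)
  have q\<Delta>: "\<forall>k\<in>{1..m}. q k = \<Delta>0 k * s k"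
  proof
    fix k assume k: "k \<in> {1..m}"
    have Lk: "L k > 0" using Lpos k by auto
    show "q k = \<Delta>0 k * s k" using compl k Lk by (simp add: \<Delta>0_eq field_simps)
  qed
  have J0p: "\<And>k. J0 k > 0" by (simp add: J0_def Jkk_pos)
  have J0sq: "\<And>k. (J0 k)^2 = 1 + (\<Delta>0 k)^2" by (simp add: J0_def \<Delta>0_def Jkk_sq)
  have feas0: "MVGS_feasible chi n chim chip m f z0 (\<lambda>k. J0 k * s k)"
    unfolding MVGS_feasible_def Let_def
  proof (intro conjI ballI)
    fix k assume k: "k \<in> {1..m}"
    show "0 \<le> J0 k * s k" using J0p[of k] ps k by simp
  next
    fix i assume i: "i \<in> {1..n}"
    have nz: "\<And>k. Jkk chi n chim chip z0 k \<noteq> 0" using Jkk_pos by (metis less_irrefl)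
    have e1: "(\<lambda>k. J0 k * s k / Jkk chi n chim chip z0 k) = s"
      by (intro ext) (simp add: J0_def nz)
    have e2: "(\<lambda>k. Delta chi n chim chip z0 k * (J0 k * s k) / Jkk chi n chim chip z0 k) = (\<lambda>k. \<Delta>0 k * s k)"
      by (intro ext) (simp add: J0_def \<Delta>0_def nz)
    have "tmv m (matD chi chim chip) (\<lambda>k. \<Delta>0 k * s k) i = tmv m D q i"
      unfolding tmv_def D_def using q\<Delta> by (intro sum.cong) auto
    then show "tmv m (matB1 chi chim chip) (\<lambda>k. J0 k * s k / Jkk chi n chim chip z0 k) i = 0"
      "tmv m (matB2 chi chim chip) (\<lambda>k. J0 k * s k / Jkk chi n chim chip z0 k) i = 0"
      "tmv m (matD chi chim chip) (\<lambda>k. Delta chi n chim chip z0 k * (J0 k * s k) / Jkk chi n chim chip z0 k) i = f i"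
      unfolding e1 e2 using pB i by (auto simp: B1_def B2_def)
  qed
  have obj0: "MVGS_obj chi n chim chip m z0 (\<lambda>k. J0 k * s k) \<le> P_obj chim chip m s r"
    unfolding Pobj_eq MVGS_obj_def
  proof (rule sum_mono)
    fix k assume k: "k \<in> {1..m}"
    have Lk: "L k > 0" using Lpos k by auto
    have pk: "s k \<ge> 0" "r k \<ge> 0" "2 * r k * s k \<ge> (q k)^2" using ps k by (auto simp: inK_def)
    have "(\<Delta>0 k)^2 * s k \<le> 2 * r k"
    proof (cases "s k = 0")
      case True then show ?thesis using pk by simp
    next
      case False
      then have sp: "s k > 0" using pk by simp
      have "((\<Delta>0 k)^2 * s k) * s k \<le> (2 * r k) * s k"
        using pk(3) q\<Delta> k by (simp add: power2_eq_square algebra_simps)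
      then show ?thesis using sp by simp
    qed
    then have "L k * ((\<Delta>0 k)^2 * s k) \<le> L k * (2 * r k)" using Lk by simp
    moreover have "lhat chi n chim chip z0 k * (J0 k * s k) = L k * s k + L k * ((\<Delta>0 k)^2 * s k)"
    proof -
      have "lhat chi n chim chip z0 k * (J0 k * s k) = L k * (J0 k)^2 * s k"
        by (simp add: lhat_def J0_def L_def power2_eq_square)
      then show ?thesis by (simp add: J0sq algebra_simps)
    qed
    ultimately show "lhat chi n chim chip z0 k * (J0 k * s k) \<le> L k * s k + 2 * (L k * r k)" by simp
  qed
  have lower: "\<And>z' sh'. MVGS_feasible chi n chim chip m f z' sh' \<Longrightarrow>
      P_obj chim chip m s r \<le> MVGS_obj chi n chim chip m z' sh'"
  proof -
    fix z' sh' assume F: "MVGS_feasible chi n chim chip m f z' sh'"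
    define J' where "J' = Jkk chi n chim chip z'"
    define \<Delta>' where "\<Delta>' = Delta chi n chim chip z'"
    define s' where "s' = (\<lambda>k. sh' k / J' k)"
    define q' where "q' = (\<lambda>k. \<Delta>' k * sh' k / J' k)"
    define r' where "r' = (\<lambda>k. (\<Delta>' k)^2 * s' k / 2)"
    have J'p: "\<And>k. J' k > 0" by (simp add: J'_def Jkk_pos)
    have J'sq: "\<And>k. (J' k)^2 = 1 + (\<Delta>' k)^2" by (simp add: J'_def \<Delta>'_def Jkk_sq)
    have sh0: "\<forall>k\<in>{1..m}. sh' k \<ge> 0" using F by (simp add: MVGS_feasible_def)
    have tm: "\<forall>i\<in>{1..n}. tmv m (matB1 chi chim chip) s' i = 0 \<and> tmv m (matB2 chi chim chip) s' i = 0 \<and>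
                 tmv m (matD chi chim chip) q' i = f i"
      using F unfolding MVGS_feasible_def Let_def s'_def q'_def J'_def \<Delta>'_def by blast
    have pf: "P_feasible chi n chim chip m f s' q' r'"
      unfolding P_feasible_def
    proof (intro conjI ballI)
      fix k assume k: "k \<in> {1..m}"
      have s'n: "s' k \<ge> 0" using sh0 k J'p[of k] by (simp add: s'_def)
      show "s' k \<ge> 0" by (rule s'n)
      show "r' k \<ge> 0" using s'n by (simp add: r'_def)
      have "q' k = \<Delta>' k * s' k" by (simp add: q'_def s'_def)
      then have "2 * r' k * s' k = (q' k)^2" by (simp add: r'_def power2_eq_square)
      then show "inK (r' k) (s' k) (q' k)" using s'n by (simp add: inK_def r'_def)
    next
      fix i assume i: "i \<in> {1..n}"
      show "tmv m (matB1 chi chim chip) s' i = 0" "tmv m (matB2 chi chim chip) s' i = 0"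
           "tmv m (matD chi chim chip) q' i = f i" using tm i by auto
    qed
    have "P_obj chim chip m s r \<le> P_obj chim chip m s' r'" by (rule popt[OF pf])
    also have "\<dots> = MVGS_obj chi n chim chip m z' sh'"
      unfolding Pobj_eq MVGS_obj_def
    proof (rule sum.cong)
      fix k
      have "L k * s' k + 2 * (L k * r' k) = L k * (1 + (\<Delta>' k)^2) * sh' k / J' k"
        by (simp add: r'_def s'_def algebra_simps add_divide_distrib)
      also have "\<dots> = L k * (J' k)^2 * sh' k / J' k" by (simp add: J'sq)
      also have "\<dots> = lhat chi n chim chip z' k * sh' k"
        using J'p[of k] by (simp add: lhat_def J'_def L_def power2_eq_square)
      finally show "L k * s' k + 2 * (L k * r' k) = lhat chi n chim chip z' k * sh' k" .
    qed simp
    finally show "P_obj chim chip m s r \<le> MVGS_obj chi n chim chip m z' sh'" .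
  qed
  have objeq: "MVGS_obj chi n chim chip m z0 (\<lambda>k. J0 k * s k) = P_obj chim chip m s r"
    using obj0 lower[OF feas0] by linarith
  have sol: "MVGS_solves chi n chim chip m f z0 (\<lambda>k. J0 k * s k)"
    unfolding MVGS_solves_def
  proof (intro conjI allI impI)
    show "MVGS_feasible chi n chim chip m f z0 (\<lambda>k. J0 k * s k)" by (rule feas0)
  next
    fix z' sh' assume F': "MVGS_feasible chi n chim chip m f z' sh'"
    show "MVGS_obj chi n chim chip m z0 (\<lambda>k. J0 k * s k) \<le> MVGS_obj chi n chim chip m z' sh'"
      using objeq lower[OF F'] by linarith
  qed
  have V: "V_min chi n chim chip m f = P_obj chim chip m s r"
    unfolding V_min_def
  proof (rule cInf_eq_minimum)
    show "P_obj chim chip m s r \<in> {MVGS_obj chi n chim chip m z shat |z shat. MVGS_feasible chi n chim chip m f z shat}"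
      unfolding mem_Collect_eq
      by (intro exI[of _ z0] exI[of _ "\<lambda>k. J0 k * s k"]) (simp only: objeq feas0 simp_thms)
  next
    fix x assume "x \<in> {MVGS_obj chi n chim chip m z shat |z shat. MVGS_feasible chi n chim chip m f z shat}"
    then obtain z shat where "x = MVGS_obj chi n chim chip m z shat" "MVGS_feasible chi n chim chip m f z shat"
      by blast
    then show "P_obj chim chip m s r \<le> x" using lower by simp
  qed
  have Z: "Z_X chi n chim chip m f = P_obj chim chip m s r"
    unfolding Z_X_def
  proof (rule cInf_eq_minimum)
    show "P_obj chim chip m s r \<in> {P_obj chim chip m s r |s q r. P_feasible chi n chim chip m f s q r}"
      using pfeas by blast
  next
    fix x assume "x \<in> {P_obj chim chip m s r |s q r. P_feasible chi n chim chip m f s q r}"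
    then obtain s' q' r' where "x = P_obj chim chip m s' r'" "P_feasible chi n chim chip m f s' q' r'"
      by blast
    then show "P_obj chim chip m s r \<le> x" using popt by simp
  qed
  have "MVGS_solves chi n chim chip m f z0 (\<lambda>k. J0 k * s k) \<and> V_min chi n chim chip m f = Z_X chi n chim chip m f"
    using sol V Z by simp
  then show ?thesis by (simp only: f_def z0_def J0_def)
qed

end
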